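(* Let $R=R_1\times\cdots\times R_n$ be a direct product of commutative rings with nonzero identity and let $I=I_1\times\cdots\times I_n$ be an ideal of $R$, with $I_i$ an ideal of $R_i$. If $x_i$ is adjacent to $y_i$ in $\Gamma''_{I_i}(R_i)$ for some $1\leq i\leq n$, then every element of $R$ with $i$-th component $x_i$ is adjacent in $\Gamma''_I(R)$ to every element of $R$ with $i$-th component $y_i$.
   Context: The product has componentwise operations. For a commutative ring $S$ and an ideal $J$ of $S$, $\Gamma''_J(S)$ is the simple undirected graph whose vertex set is $\{x\in S\setminus J : xS+J\neq S\}$, with distinct vertices $x,y$ adjacent if and only if $x\notin yS+J$ and $y\notin xS+J$. *)

theory Defs
  imports "HOL-Algebra.Ring" "HOL-Algebra.Ideal"
begin

definition princ_plus :: "('a, 'b) ring_scheme \<Rightarrow> 'a \<Rightarrow> 'a set \<Rightarrow> 'a set" where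
  "princ_plus S x J = {x \<otimes>\<^bsub>S\<^esub> s \<oplus>\<^bsub>S\<^esub> j | s j. s \<in> carrier S \<and> j \<in> J}"

definition gvert :: "('a, 'b) ring_scheme \<Rightarrow> 'a set \<Rightarrow> 'a set" where
  "gvert S J = {x \<in> carrier S - J. princ_plus S x J \<noteq> carrier S}"

definition gadj :: "('a, 'b) ring_scheme \<Rightarrow> 'a set \<Rightarrow> 'a \<Rightarrow> 'a \<Rightarrow> bool" where
  "gadj S J x y \<longleftrightarrow> x \<in> gvert S J \<and> y \<in> gvert S J \<and> x \<noteq> y \<and>
     x \<notin> princ_plus S y J \<and> y \<notin> princ_plus S x J"

text \<open>Direct product R_0 x ... x R_(n-1) with componentwise operations;
  elements are extensional functions on {..<n}.\<close>
definition prod_ring :: "(nat \<Rightarrow> 'a ring) \<Rightarrow> nat \<Rightarrow> (nat \<Rightarrow> 'a) ring" where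
  "prod_ring R n =
     \<lparr> carrier = (\<Pi>\<^sub>E i\<in>{..<n}. carrier (R i)),
       monoid.mult = (\<lambda>f g. \<lambda>i\<in>{..<n}. f i \<otimes>\<^bsub>R i\<^esub> g i),
       one = (\<lambda>i\<in>{..<n}. \<one>\<^bsub>R i\<^esub>),
       zero = (\<lambda>i\<in>{..<n}. \<zero>\<^bsub>R i\<^esub>),
       add = (\<lambda>f g. \<lambda>i\<in>{..<n}. f i \<oplus>\<^bsub>R i\<^esub> g i) \<rparr>"

end

theory Submission
  imports Defs
begin

lemma proj_pp:
  assumes "z \<in> princ_plus (prod_ring R n) x (\<Pi>\<^sub>E k\<in>{..<n}. I k)" "i < n"
  shows "z i \<in> princ_plus (R i) (x i) (I i)"
proof -
  obtain s j where sj: "z = x \<otimes>\<^bsub>prod_ring R n\<^esub> s \<oplus>\<^bsub>prod_ring R n\<^esub> j"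
    "s \<in> carrier (prod_ring R n)" "j \<in> (\<Pi>\<^sub>E k\<in>{..<n}. I k)"
    using assms(1) unfolding princ_plus_def by blast
  have "z i = x i \<otimes>\<^bsub>R i\<^esub> s i \<oplus>\<^bsub>R i\<^esub> j i"
    using sj(1) assms(2) by (simp add: prod_ring_def)
  moreover have "s i \<in> carrier (R i)" "j i \<in> I i"
    using sj(2,3) assms(2) by (auto simp: prod_ring_def)
  ultimately show ?thesis unfolding princ_plus_def by blast
qed

lemma vert_lift:
  assumes "xi \<in> gvert (R i) (I i)" "i < n" "x \<in> carrier (prod_ring R n)" "x i = xi"
    and rg: "ring (R i)" and id: "ideal (I i) (R i)"
  shows "x \<in> gvert (prod_ring R n) (\<Pi>\<^sub>E k\<in>{..<n}. I k)"
proof -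
  have ni: "xi \<notin> I i" and ne: "princ_plus (R i) xi (I i) \<noteq> carrier (R i)"
       and xc: "xi \<in> carrier (R i)"
    using assms(1) unfolding gvert_def by auto
  have sub: "princ_plus (R i) xi (I i) \<subseteq> carrier (R i)"
    unfolding princ_plus_def using xc rg id
    by (auto intro!: ring.ring_simprules(1,5) simp: ideal.Icarr)
  then obtain c where c: "c \<in> carrier (R i)" "c \<notin> princ_plus (R i) xi (I i)"
    using ne by blast
  define z where "z = x(i := c)"
  have zc: "z \<in> carrier (prod_ring R n)"
    using assms(2,3) c unfolding z_def prod_ring_def by (auto simp: PiE_def Pi_def extensional_def)
  have "z \<notin> princ_plus (prod_ring R n) x (\<Pi>\<^sub>E k\<in>{..<n}. I k)"
    using proj_pp[of z R n x I i] assms c unfolding z_def by auto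
  moreover have "x \<notin> (\<Pi>\<^sub>E k\<in>{..<n}. I k)" using ni assms(2,4) by auto
  ultimately show ?thesis using zc assms(3) unfolding gvert_def by blast
qed

theorem lemma2p1:
  fixes R :: "nat \<Rightarrow> 'a ring" and I :: "nat \<Rightarrow> 'a set" and n i :: nat
    and xi yi :: 'a and x y :: "nat \<Rightarrow> 'a"
  assumes "\<forall>k<n. cring (R k)"
    and "\<forall>k<n. \<one>\<^bsub>R k\<^esub> \<noteq> \<zero>\<^bsub>R k\<^esub>"
    and "\<forall>k<n. ideal (I k) (R k)"
    and "i < n"
    and "gadj (R i) (I i) xi yi"
    and "x \<in> carrier (prod_ring R n)" and "y \<in> carrier (prod_ring R n)"
    and "x i = xi" and "y i = yi"
  shows "gadj (prod_ring R n) (\<Pi>\<^sub>E k\<in>{..<n}. I k) x y"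
proof -
  have rg: "ring (R i)" using assms(1,4) cring.axioms(1) by blast
  have id: "ideal (I i) (R i)" using assms(3,4) by blast
  have g: "xi \<in> gvert (R i) (I i)" "yi \<in> gvert (R i) (I i)" "xi \<noteq> yi"
    "xi \<notin> princ_plus (R i) yi (I i)" "yi \<notin> princ_plus (R i) xi (I i)"
    using assms(5) unfolding gadj_def by auto
  show ?thesis unfolding gadj_def
    using vert_lift[of xi R i I n x, OF g(1) assms(4,6,8) rg id] vert_lift[of yi R i I n y, OF g(2) assms(4,7,9) rg id]
      g(3-5) assms(4,8,9) proj_pp[of x R n y I i] proj_pp[of y R n x I i] by auto
qed

end
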